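(* Fix an integer $k\ge1$ and let $\Delta_k:=\log(1/2)/\log(1-2^{-k})$. Fix $\Delta>0$, and for $n\ge k$ let $m=\lfloor\Delta n\rfloor$ and $V=(V_1,\dots,V_m)\sim\mathbf{P}_{\text{unif}}$. As $n\to\infty$: (i) if $\Delta<\Delta_k$, then $\mathbf{P}_{\text{unif}}(V\in\mathsf{FLAT})\to 1$; (ii) if $\Delta>\Delta_k$, then $\mathbf{P}_{\text{unif}}(V\in\mathsf{FLAT})\to 0$.
   Context: A $k$-flat of $\mathbb{F}_2^n$ is an affine subspace of dimension $n-k$; equivalently a set $\{x\in\mathbb{F}_2^n : \ell_i(x)=\varepsilon_i \ \forall i\in[k]\}$ where $\ell_1,\dots,\ell_k$ are linearly independent linear forms on $\mathbb{F}_2^n$ and $\varepsilon_1,\dots,\varepsilon_k\in\mathbb{F}_2$. Let $q_0$ be the uniform distribution on the set of all $k$-flats of $\mathbb{F}_2^n$, and $\mathbf{P}_{\text{unif}}:=q_0^{\otimes m}$ (i.e. $V_1,\dots,V_m$ i.i.d. uniform $k$-flats). For $V=(V_1,\dots,V_m)$, let $\mathcal{S}(V)=\mathbb{F}_2^n\setminus\bigcup_{j=1}^m V_j$ and $Z(V)=|\mathcal{S}(V)|$. $V$ is flat satisfiable, written $V\in\mathsf{FLAT}$, if $Z(V)\ge1$, i.e. $\bigcup_j V_j\neq\mathbb{F}_2^n$. *)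

theory Defs
  imports "HOL-Probability.Probability"
begin

text \<open>F_2^n is modelled as the set of boolean lists of length n (True = 1).\<close>
definition cube :: "nat \<Rightarrow> bool list set" where
  "cube n = {x. length x = n}"

definition lform :: "bool list \<Rightarrow> bool list \<Rightarrow> bool" where
  "lform a x = odd (card {i. i < length x \<and> i < length a \<and> a ! i \<and> x ! i})"

text \<open>Linear independence over F_2 of the forms lform (a 0), ..., lform (a (k-1)) on F_2^n:
  no nonempty subfamily sums to the zero form.\<close>
definition lin_indep_forms :: "nat \<Rightarrow> nat \<Rightarrow> (nat \<Rightarrow> bool list) \<Rightarrow> bool" where
  "lin_indep_forms n k a \<longleftrightarrow>
     (\<forall>S. S \<subseteq> {..<k} \<and> S \<noteq> {} \<longrightarrow>
        (\<exists>x\<in>cube n. odd (card {i\<in>S. lform (a i) x})))"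

definition kflats :: "nat \<Rightarrow> nat \<Rightarrow> bool list set set" where
  "kflats n k = {F. \<exists>a \<epsilon>. (\<forall>i<k. length (a i) = n) \<and> lin_indep_forms n k a \<and>
        F = {x\<in>cube n. \<forall>i<k. lform (a i) x = \<epsilon> i}}"

definition FLAT :: "nat \<Rightarrow> nat \<Rightarrow> (nat \<Rightarrow> bool list set) \<Rightarrow> bool" where
  "FLAT n m V \<longleftrightarrow> cube n - (\<Union>j<m. V j) \<noteq> {}"

definition P_unif :: "nat \<Rightarrow> nat \<Rightarrow> nat \<Rightarrow> (nat \<Rightarrow> bool list set) pmf" where
  "P_unif n k m = Pi_pmf {..<m} {} (\<lambda>_. pmf_of_set (kflats n k))"

definition Delta_k :: "nat \<Rightarrow> real" where
  "Delta_k k = ln (1/2) / ln (1 - 2 powr (- real k))"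

end

theory Submission
  imports Defs
begin


definition xl :: "bool list \<Rightarrow> bool list \<Rightarrow> bool list" where
  "xl x y = map2 (\<noteq>) x y"

lemma xl_length[simp]: "length (xl x y) = min (length x) (length y)"
  by (simp add: xl_def)

lemma xl_nth[simp]: "i < length x \<Longrightarrow> i < length y \<Longrightarrow> xl x y ! i = (x!i \<noteq> y!i)"
  by (simp add: xl_def)

lemma xl_cube: "x \<in> cube n \<Longrightarrow> y \<in> cube n \<Longrightarrow> xl x y \<in> cube n"
  by (simp add: cube_def)

lemma xl_xl: "x \<in> cube n \<Longrightarrow> y \<in> cube n \<Longrightarrow> xl (xl x y) y = x"
  by (auto simp: cube_def intro!: nth_equalityI)

lemma xl_xl': "x \<in> cube n \<Longrightarrow> y \<in> cube n \<Longrightarrow> xl x (xl x y) = y"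
  by (auto simp: cube_def intro!: nth_equalityI)

lemma xl_comm: "xl x y = xl y x"
  by (auto simp: xl_def intro!: nth_equalityI)

lemma odd_card_xor:
  assumes "finite U"
  shows "odd (card {i\<in>U. P i \<noteq> Q i}) = (odd (card {i\<in>U. P i}) \<noteq> odd (card {i\<in>U. Q i}))"
  using assms
proof (induction rule: finite_induct)
  case empty
  then show ?case by simp
next
  case (insert a U)
  have e: "\<And>R. {i\<in>insert a U. R i} = (if R a then insert a {i\<in>U. R i} else {i\<in>U. R i})"
    by auto
  have c: "\<And>R. card (insert a {i\<in>U. R i}) = Suc (card {i\<in>U. R i})"
    using insert by (subst card_insert_disjoint) auto
  show ?case unfolding e using insert.IH by (auto simp: c)
qed

lemma lform_alt: "length x = n \<Longrightarrow>
   lform a x = odd (card {i \<in> {i. i < n \<and> i < length a \<and> a!i}. x!i})"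
  unfolding lform_def by (rule arg_cong[where f="\<lambda>S. odd (card S)"]) auto

lemma lform_xl:
  assumes "length x = n" "length y = n"
  shows "lform a (xl x y) = (lform a x \<noteq> lform a y)"
proof -
  have "lform a (xl x y) = odd (card {i \<in> {i. i < n \<and> i < length a \<and> a!i}. x!i \<noteq> y!i})"
    unfolding lform_def using assms
    by (intro arg_cong[where f="\<lambda>S. odd (card S)"]) auto
  also have "\<dots> = (lform a x \<noteq> lform a y)"
    by (subst odd_card_xor) (auto simp: lform_alt[OF assms(1)] lform_alt[OF assms(2)])
  finally show ?thesis .
qed

lemma lform_sym: "lform a x = lform x a"
  unfolding lform_def by (rule arg_cong[where f="\<lambda>S. odd (card S)"]) auto

lemma lform_xl_left:
  assumes "length a = n" "length b = n"
  shows "lform (xl a b) x = (lform a x \<noteq> lform b x)"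
  using lform_xl[OF assms, of x] by (simp add: lform_sym)

lemma lform_zero[simp]: "lform a (replicate n False) = False"
proof -
  have "{i. i < n \<and> i < length a \<and> a ! i \<and> replicate n False ! i} = {}"
    by auto
  then show ?thesis unfolding lform_def length_replicate by (simp only:) simp
qed

lemma finite_cube: "finite (cube n)"
  unfolding cube_def using finite_lists_length_eq[of "UNIV::bool set" n] by simp

lemma card_cube: "card (cube n) = 2 ^ n"
  unfolding cube_def using card_lists_length_eq[of "UNIV::bool set" n] by simp

lemma zero_cube: "replicate n False \<in> cube n"
  by (simp add: cube_def)

definition sg :: "bool \<Rightarrow> real" where "sg b = (if b then -1 else 1)"

lemma prod_sg: "finite S \<Longrightarrow> (\<Prod>i\<in>S. sg (b i)) = sg (odd (card {i\<in>S. b i}))"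
proof (induction rule: finite_induct)
  case empty
  then show ?case by (simp add: sg_def)
next
  case (insert a S)
  have e: "{i\<in>insert a S. b i} = (if b a then insert a {i\<in>S. b i} else {i\<in>S. b i})"
    by auto
  have c: "card (insert a {i\<in>S. b i}) = Suc (card {i\<in>S. b i})"
    using insert by (subst card_insert_disjoint) auto
  have "(\<Prod>i\<in>insert a S. sg (b i)) = sg (b a) * sg (odd (card {i\<in>S. b i}))"
    using insert by simp
  then show ?case unfolding e by (simp add: c sg_def)
qed

lemma prod_of_bool: "finite A \<Longrightarrow> (\<Prod>i\<in>A. (of_bool (P i) :: real)) = of_bool (\<forall>i\<in>A. P i)"
  by (induction rule: finite_induct) auto

lemma balanced:
  assumes lin: "\<And>x y. x \<in> cube n \<Longrightarrow> y \<in> cube n \<Longrightarrow> f (xl x y) = (f x \<noteq> f y)"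
    and x0: "x0 \<in> cube n" "f x0"
  shows "(\<Sum>x\<in>cube n. sg (f x)) = 0"
proof -
  have "(\<Sum>x\<in>cube n. sg (f x)) = (\<Sum>x\<in>cube n. sg (f (xl x x0)))"
    by (rule sum.reindex_bij_witness[where i="\<lambda>x. xl x x0" and j="\<lambda>x. xl x x0"])
       (auto simp: xl_xl xl_cube x0)
  also have "\<dots> = (\<Sum>x\<in>cube n. - sg (f x))"
    by (rule sum.cong) (auto simp: lin x0 sg_def)
  finally show ?thesis by (simp add: sum_negf)
qed

lemma fiber_card:
  assumes lens: "\<forall>i<k. length (a i) = n" and indep: "lin_indep_forms n k a"
  shows "real (card {x\<in>cube n. \<forall>i<k. lform (a i) x = \<epsilon> i}) * 2^k = 2^n"
proof -
  define t where "t x i = sg (lform (a i) x) * sg (\<epsilon> i)" for x i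
  have ind: "of_bool (p = q) = (t' + 1) / 2" if "t' = sg p * sg q" for p q t'
    using that by (auto simp: sg_def)
  have "real (card {x\<in>cube n. \<forall>i<k. lform (a i) x = \<epsilon> i})
      = (\<Sum>x\<in>cube n. of_bool (\<forall>i<k. lform (a i) x = \<epsilon> i))"
    by (simp add: finite_cube Int_def)
  also have "\<dots> = (\<Sum>x\<in>cube n. \<Prod>i\<in>{..<k}. of_bool (lform (a i) x = \<epsilon> i))"
    by (intro sum.cong refl, subst prod_of_bool) auto
  also have "\<dots> = (\<Sum>x\<in>cube n. \<Prod>i\<in>{..<k}. (t x i + 1) / 2)"
    by (intro sum.cong prod.cong refl ind) (simp add: t_def)
  also have "\<dots> = (\<Sum>x\<in>cube n. (\<Prod>i\<in>{..<k}. (t x i + 1)) / 2^k)"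
    by (simp add: prod_dividef)
  also have "\<dots> = (\<Sum>x\<in>cube n. \<Sum>S\<in>Pow {..<k}. \<Prod>i\<in>S. t x i) / 2^k"
    by (simp add: prod_add sum_divide_distrib)
  also have "(\<Sum>x\<in>cube n. \<Sum>S\<in>Pow {..<k}. \<Prod>i\<in>S. t x i)
      = (\<Sum>S\<in>Pow {..<k}. \<Sum>x\<in>cube n. \<Prod>i\<in>S. t x i)"
    by (rule sum.swap)
  also have "\<dots> = (\<Sum>S\<in>Pow {..<k}. if S = {} then 2^n else 0)"
  proof (rule sum.cong[OF refl])
    fix S assume S: "S \<in> Pow {..<k}"
    then have fS: "finite S" by (auto intro: finite_subset)
    have "(\<Sum>x\<in>cube n. \<Prod>i\<in>S. t x i)
        = (\<Sum>x\<in>cube n. (\<Prod>i\<in>S. sg (\<epsilon> i)) * sg (odd (card {i\<in>S. lform (a i) x})))"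
      by (intro sum.cong refl) (simp add: t_def prod.distrib prod_sg[OF fS] mult.commute)
    also have "\<dots> = (\<Prod>i\<in>S. sg (\<epsilon> i)) * (\<Sum>x\<in>cube n. sg (odd (card {i\<in>S. lform (a i) x})))"
      by (simp add: sum_distrib_left)
    also have "\<dots> = (if S = {} then 2^n else 0)"
    proof (cases "S = {}")
      case True
      then show ?thesis by (simp add: sg_def card_cube)
    next
      case False
      have lin: "odd (card {i\<in>S. lform (a i) (xl x y)}) =
            (odd (card {i\<in>S. lform (a i) x}) \<noteq> odd (card {i\<in>S. lform (a i) y}))"
        if "x \<in> cube n" "y \<in> cube n" for x y
      proof -
        have "\<And>i. lform (a i) (xl x y) = (lform (a i) x \<noteq> lform (a i) y)"
          using that by (simp add: cube_def lform_xl)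
        then show ?thesis by (simp only:) (rule odd_card_xor[OF fS])
      qed
      obtain x0 where "x0 \<in> cube n" "odd (card {i\<in>S. lform (a i) x0})"
        using indep False S unfolding lin_indep_forms_def by auto
      then have "(\<Sum>x\<in>cube n. sg (odd (card {i\<in>S. lform (a i) x}))) = 0"
        by (intro balanced[of n _ x0]) (use lin in auto)
      then show ?thesis using False by simp
    qed
    finally show "(\<Sum>x\<in>cube n. \<Prod>i\<in>S. t x i) = (if S = {} then 2^n else 0)" .
  qed
  also have "\<dots> = 2^n"
    by (simp add: sum.delta')
  finally show ?thesis by simp
qed



definition unit :: "nat \<Rightarrow> nat \<Rightarrow> bool list" where
  "unit n j = map (\<lambda>i. i = j) [0..<n]"

lemma unit_cube: "unit n j \<in> cube n" by (simp add: unit_def cube_def)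

lemma unit_nth[simp]: "i < n \<Longrightarrow> unit n j ! i = (i = j)" by (simp add: unit_def)

lemma lform_unit: assumes "x \<in> cube n" "j < n" shows "lform (unit n j) x = x ! j"
proof -
  have "{i. i < length x \<and> i < length (unit n j) \<and> unit n j ! i \<and> x ! i} = (if x!j then {j} else {})"
    using assms by (auto simp: cube_def unit_def)
  then show ?thesis unfolding lform_def by simp
qed

lemma finite_kflats: "finite (kflats n k)"
proof -
  have "kflats n k \<subseteq> Pow (cube n)" unfolding kflats_def by auto
  then show ?thesis using finite_cube by (meson finite_Pow_iff finite_subset)
qed

lemma kflats_sub: "F \<in> kflats n k \<Longrightarrow> F \<subseteq> cube n"
  unfolding kflats_def by auto

lemma kflats_card: "F \<in> kflats n k \<Longrightarrow> real (card F) * 2^k = 2^n"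
  unfolding kflats_def using fiber_card by auto

lemma kflats_nonempty:
  assumes "k \<le> n" shows "kflats n k \<noteq> {}"
proof -
  have "lin_indep_forms n k (\<lambda>i. unit n i)"
    unfolding lin_indep_forms_def
  proof (intro allI impI)
    fix S assume S: "S \<subseteq> {..<k} \<and> S \<noteq> {}"
    then obtain j where j: "j \<in> S" by auto
    then have jn: "j < n" using S assms by auto
    have "{i\<in>S. lform (unit n i) (unit n j)} = {j}"
    proof -
      have "lform (unit n i) (unit n j) = (i = j)" if "i \<in> S" for i
        using that S assms jn by (subst lform_sym, subst lform_unit[OF unit_cube jn]) auto
      then show ?thesis using j by auto
    qed
    then show "\<exists>x\<in>cube n. odd (card {i\<in>S. lform (unit n i) x})"
      using unit_cube by (intro bexI[of _ "unit n j"]) auto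
  qed
  then have "{x\<in>cube n. \<forall>i<k. lform (unit n i) x = False} \<in> kflats n k"
    unfolding kflats_def
    by (intro CollectI exI[of _ "\<lambda>i. unit n i"] exI[of _ "\<lambda>i. False"] conjI) (auto simp: unit_def)
  then show ?thesis by auto
qed

lemma flat_image:
  assumes sc: "\<And>x. x\<in>cube n \<Longrightarrow> \<sigma> x \<in> cube n"
    and si: "\<And>x. x\<in>cube n \<Longrightarrow> \<sigma> (\<sigma> x) = x"
    and Bl: "\<And>a. length a = n \<Longrightarrow> length (B a) = n"
    and form: "\<And>a x. length a = n \<Longrightarrow> x \<in> cube n \<Longrightarrow> lform a (\<sigma> x) = (lform (B a) x \<noteq> C a)"
    and ind: "\<And>a. (\<forall>i<k. length (a i) = n) \<Longrightarrow> lin_indep_forms n k a \<Longrightarrow> lin_indep_forms n k (\<lambda>i. B (a i))"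
    and F: "F \<in> kflats n k"
  shows "\<sigma> ` F \<in> kflats n k"
proof -
  obtain a \<epsilon> where a: "\<forall>i<k. length (a i) = n" "lin_indep_forms n k a"
    and Fe: "F = {x\<in>cube n. \<forall>i<k. lform (a i) x = \<epsilon> i}"
    using F unfolding kflats_def by auto
  have "\<sigma> ` F = {y\<in>cube n. \<forall>i<k. lform (B (a i)) y = (\<epsilon> i \<noteq> C (a i))}"
  proof (intro equalityI subsetI)
    fix y assume "y \<in> \<sigma> ` F"
    then obtain x where x: "x \<in> F" "y = \<sigma> x" by auto
    then have xc: "x \<in> cube n" using Fe by auto
    have yc: "y \<in> cube n" using sc xc x by auto
    have "lform (B (a i)) y = (\<epsilon> i \<noteq> C (a i))" if "i < k" for i
    proof -
      have "lform (a i) (\<sigma> y) = (lform (B (a i)) y \<noteq> C (a i))"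
        using form[of "a i" y] a that yc by auto
      moreover have "lform (a i) (\<sigma> y) = \<epsilon> i" using x si[OF xc] Fe that by auto
      ultimately show ?thesis by auto
    qed
    then show "y \<in> {y\<in>cube n. \<forall>i<k. lform (B (a i)) y = (\<epsilon> i \<noteq> C (a i))}" using yc by auto
  next
    fix y assume y: "y \<in> {y\<in>cube n. \<forall>i<k. lform (B (a i)) y = (\<epsilon> i \<noteq> C (a i))}"
    then have yc: "y \<in> cube n" by auto
    have "lform (a i) (\<sigma> y) = \<epsilon> i" if "i < k" for i
      using form[of "a i" y] a that yc y by auto
    then have "\<sigma> y \<in> F" unfolding Fe using sc[OF yc] by auto
    then show "y \<in> \<sigma> ` F" using si[OF yc] by (metis image_eqI)
  qed
  moreover have "\<forall>i<k. length (B (a i)) = n" using a Bl by auto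
  moreover have "lin_indep_forms n k (\<lambda>i. B (a i))" using ind a by auto
  ultimately show ?thesis unfolding kflats_def
    by (intro CollectI exI[of _ "\<lambda>i. B (a i)"] exI[of _ "\<lambda>i. \<epsilon> i \<noteq> C (a i)"] conjI) auto
qed

lemma count_inv:
  assumes sc: "\<And>x. x\<in>cube n \<Longrightarrow> \<sigma> x \<in> cube n"
    and si: "\<And>x. x\<in>cube n \<Longrightarrow> \<sigma> (\<sigma> x) = x"
    and img: "\<And>F. F \<in> kflats n k \<Longrightarrow> \<sigma> ` F \<in> kflats n k"
    and X: "X \<subseteq> cube n"
  shows "card {F\<in>kflats n k. X \<subseteq> F} = card {F\<in>kflats n k. \<sigma> ` X \<subseteq> F}"
proof -
  have ii: "\<sigma> ` \<sigma> ` F = F" if "F \<subseteq> cube n" for F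
  proof -
    have "\<sigma> ` \<sigma> ` F = (\<lambda>x. \<sigma> (\<sigma> x)) ` F" by (simp only: image_image)
    also have "\<dots> = id ` F"
      by (rule image_cong[OF refl]) (use si that in auto)
    finally show ?thesis by simp
  qed
  let ?A = "{F\<in>kflats n k. X \<subseteq> F}" and ?B = "{F\<in>kflats n k. \<sigma> ` X \<subseteq> F}"
  have "bij_betw (image \<sigma>) ?A ?B"
  proof (rule bij_betw_byWitness[where f'="image \<sigma>"])
    show "\<forall>F\<in>?A. \<sigma> ` \<sigma> ` F = F"
    proof
      fix F assume "F \<in> ?A" then have "F \<subseteq> cube n" using kflats_sub by blast
      then show "\<sigma> ` \<sigma> ` F = F" by (rule ii)
    qed
    show "\<forall>F\<in>?B. \<sigma> ` \<sigma> ` F = F"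
    proof
      fix F assume "F \<in> ?B" then have "F \<subseteq> cube n" using kflats_sub by blast
      then show "\<sigma> ` \<sigma> ` F = F" by (rule ii)
    qed
    show "image \<sigma> ` ?A \<subseteq> ?B"
    proof
      fix G assume "G \<in> image \<sigma> ` ?A"
      then obtain F where F: "F \<in> kflats n k" "X \<subseteq> F" and G: "G = \<sigma> ` F" by blast
      have "\<sigma> ` X \<subseteq> G" using F(2) G by (simp add: image_mono)
      then show "G \<in> ?B" using img[OF F(1)] G by blast
    qed
    show "image \<sigma> ` ?B \<subseteq> ?A"
    proof
      fix G assume "G \<in> image \<sigma> ` ?B"
      then obtain F where F: "F \<in> kflats n k" "\<sigma> ` X \<subseteq> F" and G: "G = \<sigma> ` F" by blast
      have "X = \<sigma> ` \<sigma> ` X" using ii[OF X] by simp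
      also have "\<dots> \<subseteq> G" using F(2) G by (simp add: image_mono)
      finally show "G \<in> ?A" using img[OF F(1)] G by blast
    qed
  qed
  then show ?thesis by (rule bij_betw_same_card)
qed

lemma xl_self: "x \<in> cube n \<Longrightarrow> xl x x = replicate n False"
  by (auto simp: cube_def intro!: nth_equalityI)

lemma translate_image:
  assumes t: "t \<in> cube n" and F: "F \<in> kflats n k"
  shows "(\<lambda>x. xl x t) ` F \<in> kflats n k"
proof (rule flat_image[where B=id and C="\<lambda>a. lform a t"])
  show "\<And>x. x \<in> cube n \<Longrightarrow> xl x t \<in> cube n" using t by (simp add: xl_cube)
  show "\<And>x. x \<in> cube n \<Longrightarrow> xl (xl x t) t = x" using t by (simp add: xl_xl)
  show "\<And>a. length a = n \<Longrightarrow> length (id a) = n" by simp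
  show "\<And>a x. length a = n \<Longrightarrow> x \<in> cube n \<Longrightarrow> lform a (xl x t) = (lform (id a) x \<noteq> lform a t)"
    using t by (simp add: lform_xl cube_def)
  show "\<And>a. (\<forall>i<k. length (a i) = n) \<Longrightarrow> lin_indep_forms n k a \<Longrightarrow> lin_indep_forms n k (\<lambda>i. id (a i))"
    by simp
qed (rule F)

lemma count_translate:
  assumes t: "t \<in> cube n" and X: "X \<subseteq> cube n"
  shows "card {F\<in>kflats n k. X \<subseteq> F} = card {F\<in>kflats n k. (\<lambda>x. xl x t) ` X \<subseteq> F}"
proof (rule count_inv)
  show "\<And>x. x \<in> cube n \<Longrightarrow> xl x t \<in> cube n" using t by (simp add: xl_cube)
  show "\<And>x. x \<in> cube n \<Longrightarrow> xl (xl x t) t = x" using t by (simp add: xl_xl)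
  show "\<And>F. F \<in> kflats n k \<Longrightarrow> (\<lambda>x. xl x t) ` F \<in> kflats n k"
    using t by (rule translate_image)
qed (rule X)



lemma transvection_count:
  assumes d: "d \<in> cube n" and e: "e \<in> cube n" and c: "c \<in> cube n"
    and cd: "lform c d" and ce: "lform c e"
  shows "card {F\<in>kflats n k. {replicate n False, d} \<subseteq> F}
       = card {F\<in>kflats n k. {replicate n False, e} \<subseteq> F}"
proof -
  define D where "D = xl d e"
  have Dc: "D \<in> cube n" using d e by (simp add: D_def xl_cube)
  have cD: "lform c D = False" using d e cd ce by (simp add: D_def lform_xl cube_def)
  define \<sigma> where "\<sigma> x = (if lform c x then xl x D else x)" for x
  define B where "B a = (if lform a D then xl a c else a)" for a
  have sc: "\<sigma> x \<in> cube n" if "x \<in> cube n" for x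
    using that Dc by (simp add: \<sigma>_def xl_cube)
  have si: "\<sigma> (\<sigma> x) = x" if x: "x \<in> cube n" for x
  proof (cases "lform c x")
    case True
    have "lform c (xl x D) = True" using True x Dc cD by (simp add: lform_xl cube_def)
    then show ?thesis using True x Dc by (simp add: \<sigma>_def xl_xl)
  next
    case False
    then show ?thesis by (simp add: \<sigma>_def)
  qed
  have form: "lform a (\<sigma> x) = (lform (B a) x \<noteq> False)" if a: "length a = n" and x: "x \<in> cube n" for a x
  proof -
    have l1: "lform a (xl x D) = (lform a x \<noteq> lform a D)" using x Dc by (simp add: lform_xl cube_def)
    have l2: "lform (xl a c) x = (lform a x \<noteq> lform c x)" using a c by (simp add: lform_xl_left cube_def)
    show ?thesis by (cases "lform c x"; cases "lform a D") (simp_all add: \<sigma>_def B_def l1 l2)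
  qed
  have img: "\<sigma> ` F \<in> kflats n k" if F: "F \<in> kflats n k" for F
  proof (rule flat_image[where B=B and C="\<lambda>a. False"])
    show "\<And>x. x \<in> cube n \<Longrightarrow> \<sigma> x \<in> cube n" by (rule sc)
    show "\<And>x. x \<in> cube n \<Longrightarrow> \<sigma> (\<sigma> x) = x" by (rule si)
    show "\<And>a. length a = n \<Longrightarrow> length (B a) = n" using c by (simp add: B_def cube_def)
    show "\<And>a x. length a = n \<Longrightarrow> x \<in> cube n \<Longrightarrow> lform a (\<sigma> x) = (lform (B a) x \<noteq> False)"
      by (rule form)
    show "lin_indep_forms n k (\<lambda>i. B (a i))" if al: "\<forall>i<k. length (a i) = n" and ai: "lin_indep_forms n k a" for a
      unfolding lin_indep_forms_def
    proof (intro allI impI)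
      fix S assume S: "S \<subseteq> {..<k} \<and> S \<noteq> {}"
      then obtain x0 where x0: "x0 \<in> cube n" "odd (card {i\<in>S. lform (a i) x0})"
        using ai unfolding lin_indep_forms_def by blast
      have "lform (B (a i)) (\<sigma> x0) = lform (a i) x0" if "i \<in> S" for i
        using form[of "a i" "\<sigma> x0"] si[OF x0(1)] sc[OF x0(1)] al that S by auto
      then have "{i\<in>S. lform (B (a i)) (\<sigma> x0)} = {i\<in>S. lform (a i) x0}" by auto
      then show "\<exists>x\<in>cube n. odd (card {i\<in>S. lform (B (a i)) x})"
        using x0 sc[OF x0(1)] by (intro bexI[of _ "\<sigma> x0"]) auto
    qed
  qed (rule F)
  have X: "{replicate n False, d} \<subseteq> cube n" using d zero_cube by auto
  have eq: "\<sigma> ` {replicate n False, d} = {replicate n False, e}"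
    using cd d e by (simp add: \<sigma>_def D_def xl_xl')
  show ?thesis using count_inv[OF sc si img X] unfolding eq .
qed

lemma nonzero_nth:
  assumes "d \<in> cube n" "d \<noteq> replicate n False" shows "\<exists>j<n. d ! j"
proof (rule ccontr)
  assume "\<not> (\<exists>j<n. d ! j)"
  then have "d = replicate n False" using assms(1) by (auto simp: cube_def intro!: nth_equalityI)
  then show False using assms(2) by simp
qed

lemma exists_c:
  assumes d: "d \<in> cube n" "d \<noteq> replicate n False" and e: "e \<in> cube n" "e \<noteq> replicate n False"
  shows "\<exists>c\<in>cube n. lform c d \<and> lform c e"
proof -
  obtain j where j: "j < n" "d ! j" using nonzero_nth[OF d] by blast
  obtain j' where j': "j' < n" "e ! j'" using nonzero_nth[OF e] by blast
  show ?thesis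
  proof (cases "d ! j'")
    case True
    then show ?thesis using j' d e by (intro bexI[of _ "unit n j'"]) (auto simp: lform_unit unit_cube)
  next
    case F1: False
    show ?thesis
    proof (cases "e ! j")
      case True
      then show ?thesis using j d e by (intro bexI[of _ "unit n j"]) (auto simp: lform_unit unit_cube)
    next
      case False
      have "lform (xl (unit n j) (unit n j')) x = (x ! j \<noteq> x ! j')" if "x \<in> cube n" for x
        using that j j' lform_xl_left[of "unit n j" n "unit n j'" x]
        by (simp add: unit_def lform_unit[symmetric])
      then show ?thesis using j j' F1 False d e
        by (intro bexI[of _ "xl (unit n j) (unit n j')"]) (auto simp: xl_cube unit_cube)
    qed
  qed
qed

lemma xl_zero: "x \<in> cube n \<Longrightarrow> xl (replicate n False) x = x"
  by (auto simp: cube_def intro!: nth_equalityI)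

lemma pair_const:
  assumes n: "1 \<le> n" and x: "x \<in> cube n" and y: "y \<in> cube n" and xy: "x \<noteq> y"
  shows "card {F\<in>kflats n k. x \<in> F \<and> y \<in> F}
       = card {F\<in>kflats n k. {replicate n False, unit n 0} \<subseteq> F}"
proof -
  define d where "d = xl y x"
  have dc: "d \<in> cube n" using x y by (simp add: d_def xl_cube)
  have dz: "d \<noteq> replicate n False"
  proof
    assume "d = replicate n False"
    then have "xl d x = x" using x by (simp add: xl_zero)
    then show False using xl_xl[OF y x] xy by (simp add: d_def)
  qed
  have uz: "unit n 0 \<noteq> replicate n False"
  proof
    assume "unit n 0 = replicate n False"
    then have "unit n 0 ! 0 = replicate n False ! 0" by simp
    then show False using n by simp
  qed
  have "card {F\<in>kflats n k. x \<in> F \<and> y \<in> F} = card {F\<in>kflats n k. {x, y} \<subseteq> F}" by simp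
  also have "\<dots> = card {F\<in>kflats n k. (\<lambda>v. xl v x) ` {x, y} \<subseteq> F}"
    by (rule count_translate) (use x y in auto)
  also have "(\<lambda>v. xl v x) ` {x, y} = {replicate n False, d}"
    using x by (simp add: xl_self d_def)
  also have "card {F\<in>kflats n k. {replicate n False, d} \<subseteq> F}
      = card {F\<in>kflats n k. {replicate n False, unit n 0} \<subseteq> F}"
  proof -
    obtain c where "c \<in> cube n" "lform c d" "lform c (unit n 0)"
      using exists_c[OF dc dz unit_cube uz] by blast
    then show ?thesis by (intro transvection_count dc unit_cube)
  qed
  finally show ?thesis .
qed

lemma point_const:
  assumes x: "x \<in> cube n"
  shows "card {F\<in>kflats n k. x \<in> F} = card {F\<in>kflats n k. replicate n False \<in> F}"
proof -
  have "card {F\<in>kflats n k. x \<in> F} = card {F\<in>kflats n k. {x} \<subseteq> F}" by simp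
  also have "\<dots> = card {F\<in>kflats n k. (\<lambda>v. xl v x) ` {x} \<subseteq> F}"
    by (rule count_translate) (use x in auto)
  also have "(\<lambda>v. xl v x) ` {x} = {replicate n False}" using x by (simp add: xl_self)
  finally show ?thesis by simp
qed



lemma sum_card_filter:
  assumes "finite K"
  shows "real (card {F\<in>K. P F}) = (\<Sum>F\<in>K. of_bool (P F))"
  using assms by (simp add: Int_def)

lemma flat_counts:
  assumes n: "1 \<le> n"
  shows "real (card {F\<in>kflats n k. replicate n False \<in> F}) * 2^k = real (card (kflats n k))"
    and "real (card {F\<in>kflats n k. {replicate n False, unit n 0} \<subseteq> F}) * 2^(2*k)
           \<le> real (card (kflats n k))"
proof -
  define K where "K = kflats n k"
  define z where "z = replicate n False"
  define c0 where "c0 = real (card {F\<in>K. z \<in> F})"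
  define r where "r = real (card {F\<in>K. {z, unit n 0} \<subseteq> F})"
  define N where "N = real (card K)"
  have fK: "finite K" by (simp add: K_def finite_kflats)
  have cF: "real (card F) = 2^n / 2^k" if "F \<in> K" for F
    using kflats_card[of F n k] that by (simp add: K_def field_simps)
  have subF: "F \<subseteq> cube n" if "F \<in> K" for F using that kflats_sub by (auto simp: K_def)
  have "(\<Sum>x\<in>cube n. real (card {F\<in>K. x \<in> F})) = (\<Sum>x\<in>cube n. \<Sum>F\<in>K. of_bool (x \<in> F))"
    by (simp add: sum_card_filter[OF fK])
  also have "\<dots> = (\<Sum>F\<in>K. \<Sum>x\<in>cube n. of_bool (x \<in> F))" by (rule sum.swap)
  also have "\<dots> = (\<Sum>F\<in>K. real (card F))"
  proof (rule sum.cong[OF refl])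
    fix F assume "F \<in> K"
    then have "cube n \<inter> {x. x \<in> F} = F" using subF by auto
    then show "(\<Sum>x\<in>cube n. of_bool (x \<in> F)) = real (card F)"
      by (simp add: finite_cube)
  qed
  also have "\<dots> = N * (2^n / 2^k)" by (simp add: cF N_def)
  finally have e1: "(\<Sum>x\<in>cube n. real (card {F\<in>K. x \<in> F})) = N * (2^n / 2^k)" .
  have "(\<Sum>x\<in>cube n. real (card {F\<in>K. x \<in> F})) = (\<Sum>x\<in>cube n. c0)"
    by (rule sum.cong[OF refl]) (simp add: c0_def z_def K_def point_const)
  then have e1': "2^n * c0 = N * (2^n / 2^k)" using e1 by (simp add: card_cube)
  then show c0k: "real (card {F\<in>kflats n k. replicate n False \<in> F}) * 2^k = real (card (kflats n k))"
    unfolding c0_def[symmetric, unfolded K_def z_def] N_def[symmetric, unfolded K_def]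
    by (simp add: field_simps)
  have zc: "z \<in> cube n" by (simp add: z_def zero_cube)
  have "(\<Sum>y\<in>cube n - {z}. real (card {F\<in>K. z \<in> F \<and> y \<in> F}))
      = (\<Sum>y\<in>cube n - {z}. \<Sum>F\<in>K. of_bool (z \<in> F) * of_bool (y \<in> F))"
    by (simp only: sum_card_filter[OF fK] of_bool_conj)
  also have "\<dots> = (\<Sum>F\<in>K. \<Sum>y\<in>cube n - {z}. of_bool (z \<in> F) * of_bool (y \<in> F))" by (rule sum.swap)
  also have "\<dots> = (\<Sum>F\<in>K. of_bool (z \<in> F) * (2^n / 2^k - 1))"
  proof (rule sum.cong[OF refl])
    fix F assume F: "F \<in> K"
    show "(\<Sum>y\<in>cube n - {z}. of_bool (z \<in> F) * of_bool (y \<in> F)) = of_bool (z \<in> F) * ((2::real)^n / 2^k - 1)"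
    proof (cases "z \<in> F")
      case True
      have "(cube n - {z}) \<inter> {y. y \<in> F} = F - {z}" using subF[OF F] by auto
      moreover have "real (card (F - {z})) = real (card F) - 1"
        using True finite_subset[OF subF[OF F] finite_cube]
      proof -
        have fF: "finite F" using finite_subset[OF subF[OF F] finite_cube] .
        then have "card F \<ge> 1" using True by (metis One_nat_def Suc_leI card_gt_0_iff empty_iff)
        then show ?thesis using fF True by (simp add: card_Diff_singleton of_nat_diff)
      qed
      ultimately show ?thesis using True cF[OF F] by (simp add: finite_cube)
    qed simp
  qed
  also have "\<dots> = c0 * (2^n / 2^k - 1)"
    by (simp add: sum_distrib_right[symmetric] c0_def sum_card_filter[OF fK])
  finally have e2: "(\<Sum>y\<in>cube n - {z}. real (card {F\<in>K. z \<in> F \<and> y \<in> F})) = c0 * (2^n / 2^k - 1)" .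
  have "(\<Sum>y\<in>cube n - {z}. real (card {F\<in>K. z \<in> F \<and> y \<in> F})) = (\<Sum>y\<in>cube n - {z}. r)"
  proof (rule sum.cong[OF refl])
    fix y assume "y \<in> cube n - {z}"
    then show "real (card {F\<in>K. z \<in> F \<and> y \<in> F}) = r"
      using pair_const[of n z y k] n zc unfolding r_def K_def z_def by auto
  qed
  also have "\<dots> = (2^n - 1) * r"
    using zc by (simp add: card_Diff_singleton finite_cube card_cube)
  finally have e2': "(2^n - 1) * r = c0 * (2^n / 2^k - 1)" using e2 by simp
  have pk: "(2::real)^k \<ge> 1" by simp
  have pn: "(2::real)^n > 1" using n by (simp add: one_less_power)
  have c0nn: "c0 \<ge> 0" by (simp add: c0_def)
  have "(2^n - 1) * (r * 2^k) = c0 * (2^n - 2^k)"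
    using e2' by (simp add: field_simps)
  also have "\<dots> \<le> c0 * (2^n - 1)" using pk c0nn by (intro mult_left_mono) auto
  finally have "r * 2^k \<le> c0" using pn by (simp add: mult.commute)
  then have "r * 2^k * 2^k \<le> c0 * 2^k" by (simp add: mult_right_mono)
  also have "c0 * 2^k = N" using e1' by (simp add: field_simps)
  finally show "real (card {F\<in>kflats n k. {replicate n False, unit n 0} \<subseteq> F}) * 2^(2*k)
           \<le> real (card (kflats n k))"
    unfolding r_def[symmetric, unfolded K_def z_def] N_def[symmetric, unfolded K_def]
    by (simp add: power_add mult_2 mult.assoc)
qed



definition gq :: "bool list \<Rightarrow> bool list set \<Rightarrow> real" where
  "gq x F = of_bool (x \<notin> F)"

definition Zc :: "nat \<Rightarrow> nat \<Rightarrow> (nat \<Rightarrow> bool list set) \<Rightarrow> real" where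
  "Zc n m V = (\<Sum>x\<in>cube n. \<Prod>j<m. gq x (V j))"

lemma Zc_card: "Zc n m V = real (card {x\<in>cube n. \<forall>j<m. x \<notin> V j})"
proof -
  have "Zc n m V = (\<Sum>x\<in>cube n. of_bool (\<forall>j\<in>{..<m}. x \<notin> V j))"
    unfolding Zc_def gq_def by (intro sum.cong refl prod_of_bool) simp
  also have "\<dots> = real (card (cube n \<inter> {x. \<forall>j\<in>{..<m}. x \<notin> V j}))"
    by (intro sum_of_bool_eq finite_cube)
  also have "cube n \<inter> {x. \<forall>j\<in>{..<m}. x \<notin> V j} = {x\<in>cube n. \<forall>j<m. x \<notin> V j}"
    by auto
  finally show ?thesis .
qed

lemma FLAT_iff: "FLAT n m V \<longleftrightarrow> (\<exists>x\<in>cube n. \<forall>j<m. x \<notin> V j)"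
  unfolding FLAT_def by blast

lemma FLAT_le: "indicator {V. FLAT n m V} V \<le> Zc n m V"
proof (cases "FLAT n m V")
  case True
  then obtain x where x: "x \<in> {x\<in>cube n. \<forall>j<m. x \<notin> V j}" unfolding FLAT_iff by blast
  have "finite {x\<in>cube n. \<forall>j<m. x \<notin> V j}" using finite_cube by simp
  then have "card {x\<in>cube n. \<forall>j<m. x \<notin> V j} \<noteq> 0" using x by auto
  then have "real (card {x\<in>cube n. \<forall>j<m. x \<notin> V j}) \<ge> 1" by linarith
  then show ?thesis using True unfolding Zc_card by simp
next
  case False
  then show ?thesis unfolding Zc_card by simp
qed

lemma not_FLAT: assumes "\<not> FLAT n m V" shows "Zc n m V = 0"
proof -
  have e: "{x\<in>cube n. \<forall>j<m. x \<notin> V j} = {}" using assms unfolding FLAT_iff by blast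
  show ?thesis unfolding Zc_card e by simp
qed

lemma Zc_nonneg: "Zc n m V \<ge> 0" unfolding Zc_card by simp

lemma Eq1:
  assumes n: "1 \<le> n" "k \<le> n" and x: "x \<in> cube n"
  shows "measure_pmf.expectation (pmf_of_set (kflats n k)) (gq x) = 1 - 1/2^k"
proof -
  define K where "K = kflats n k"
  have fK: "finite K" and neK: "K \<noteq> {}" using n by (auto simp: K_def finite_kflats kflats_nonempty)
  define N where "N = real (card K)"
  have Npos: "N > 0" using fK neK by (simp add: N_def card_gt_0_iff)
  have c0: "real (card {F\<in>K. x \<in> F}) * 2^k = N"
    using flat_counts(1)[OF n(1), of k] point_const[OF x, of k] by (simp add: K_def N_def)
  have "(\<Sum>F\<in>K. gq x F) = (\<Sum>F\<in>K. 1 - of_bool (x \<in> F))"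
    by (intro sum.cong refl) (simp add: gq_def)
  also have "\<dots> = N - real (card {F\<in>K. x \<in> F})"
    by (simp only: sum_subtractf sum_card_filter[OF fK] N_def) simp
  also have "real (card {F\<in>K. x \<in> F}) = N / 2^k" using c0 by (simp add: field_simps)
  finally have s: "(\<Sum>F\<in>K. gq x F) = N - N / 2^k" .
  have "measure_pmf.expectation (pmf_of_set K) (gq x) = (\<Sum>F\<in>K. gq x F) / N"
    by (subst integral_pmf_of_set) (use fK neK in \<open>auto simp: N_def\<close>)
  also have "\<dots> = 1 - 1/2^k" using Npos by (simp add: s field_simps)
  finally show ?thesis by (simp add: K_def)
qed

lemma alg_helper:
  fixes N a :: real assumes "N > 0" "a > 0"
  shows "(N - N / a - N / a + N / a^2) / N = (1 - 1/a)^2"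
proof -
  have "(N - N / a - N / a + N / a^2) / N = 1 - 2/a + 1/a^2"
    using assms by (simp add: diff_divide_distrib add_divide_distrib)
  also have "\<dots> = (1 - 1/a)^2" using assms by (simp add: power2_eq_square field_simps)
  finally show ?thesis .
qed

lemma Eq2:
  assumes n: "1 \<le> n" "k \<le> n" and x: "x \<in> cube n" and y: "y \<in> cube n" and xy: "x \<noteq> y"
  shows "measure_pmf.expectation (pmf_of_set (kflats n k)) (\<lambda>F. gq x F * gq y F) \<le> (1 - 1/2^k)^2"
proof -
  define K where "K = kflats n k"
  have fK: "finite K" and neK: "K \<noteq> {}" using n by (auto simp: K_def finite_kflats kflats_nonempty)
  define N where "N = real (card K)"
  have Npos: "N > 0" using fK neK by (simp add: N_def card_gt_0_iff)
  have cx: "real (card {F\<in>K. x \<in> F}) = N / 2^k"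
    using flat_counts(1)[OF n(1), of k] point_const[OF x, of k] by (simp add: K_def N_def field_simps)
  have cy: "real (card {F\<in>K. y \<in> F}) = N / 2^k"
    using flat_counts(1)[OF n(1), of k] point_const[OF y, of k] by (simp add: K_def N_def field_simps)
  have r: "real (card {F\<in>K. x \<in> F \<and> y \<in> F}) \<le> N / 2^(2*k)"
    using flat_counts(2)[OF n(1), of k] pair_const[OF n(1) x y xy, of k]
    by (simp add: K_def N_def field_simps)
  have "(\<Sum>F\<in>K. gq x F * gq y F)
      = (\<Sum>F\<in>K. 1 - of_bool (x \<in> F) - of_bool (y \<in> F) + of_bool (x \<in> F \<and> y \<in> F))"
    by (intro sum.cong refl) (simp add: gq_def)
  also have "\<dots> = N - real (card {F\<in>K. x \<in> F}) - real (card {F\<in>K. y \<in> F})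
                   + real (card {F\<in>K. x \<in> F \<and> y \<in> F})"
    by (simp only: sum.distrib sum_subtractf sum_card_filter[OF fK] N_def) simp
  also have "\<dots> \<le> N - N / 2^k - N / 2^k + N / 2^(2*k)"
    using r by (simp add: cx cy)
  finally have s: "(\<Sum>F\<in>K. gq x F * gq y F) \<le> N - N / 2^k - N / 2^k + N / 2^(2*k)" .
  have "measure_pmf.expectation (pmf_of_set K) (\<lambda>F. gq x F * gq y F) = (\<Sum>F\<in>K. gq x F * gq y F) / N"
    by (subst integral_pmf_of_set) (use fK neK in \<open>auto simp: N_def\<close>)
  also have "\<dots> \<le> (N - N / 2^k - N / 2^k + N / 2^(2*k)) / N"
    using s Npos by (simp add: divide_right_mono)
  also have "\<dots> = (1 - 1/2^k)^2"
    using alg_helper[OF Npos, of "2^k"] by (simp add: power_mult[symmetric] mult.commute)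
  finally show ?thesis by (simp add: K_def)
qed



lemma fin_Omega: assumes "k \<le> n" shows "finite (set_pmf (P_unif n k m))"
proof -
  have "finite (kflats n k)" "kflats n k \<noteq> {}" using assms by (auto simp: finite_kflats kflats_nonempty)
  then show ?thesis unfolding P_unif_def
    by (subst set_Pi_pmf) (auto intro!: finite_PiE_dflt)
qed

lemma integ_Omega: "k \<le> n \<Longrightarrow> integrable (measure_pmf (P_unif n k m)) (f :: _ \<Rightarrow> real)"
  by (rule integrable_measure_pmf_finite) (rule fin_Omega)

lemma integ_q: "k \<le> n \<Longrightarrow> integrable (measure_pmf (pmf_of_set (kflats n k))) (f :: _ \<Rightarrow> real)"
  by (rule integrable_measure_pmf_finite) (auto simp: finite_kflats kflats_nonempty)

lemma E_prod:
  fixes f :: "bool list set \<Rightarrow> real"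
  assumes "k \<le> n" and nn: "\<And>F. f F \<ge> 0"
  shows "measure_pmf.expectation (P_unif n k m) (\<lambda>V. \<Prod>j<m. f (V j))
       = (measure_pmf.expectation (pmf_of_set (kflats n k)) f) ^ m"
proof -
  have "measure_pmf.expectation (P_unif n k m) (\<lambda>V. \<Prod>j\<in>{..<m}. f (V j))
      = (\<Prod>j\<in>{..<m}. measure_pmf.expectation (pmf_of_set (kflats n k)) (\<lambda>v. f v))"
    unfolding P_unif_def
    by (rule expectation_prod_Pi_pmf[where f="\<lambda>_. f"]) (use assms integ_q in auto)
  then show ?thesis by simp
qed

lemma gq_nonneg: "gq x F \<ge> 0" by (simp add: gq_def)

lemma EZ:
  assumes n: "1 \<le> n" "k \<le> n"
  shows "measure_pmf.expectation (P_unif n k m) (Zc n m) = 2^n * (1 - 1/2^k)^m"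
proof -
  have "measure_pmf.expectation (P_unif n k m) (Zc n m)
      = (\<Sum>x\<in>cube n. measure_pmf.expectation (P_unif n k m) (\<lambda>V. \<Prod>j<m. gq x (V j)))"
    unfolding Zc_def by (rule Bochner_Integration.integral_sum) (rule integ_Omega[OF n(2)])
  also have "\<dots> = (\<Sum>x\<in>cube n. (1 - 1/2^k)^m)"
    by (intro sum.cong refl) (simp add: E_prod[OF n(2)] gq_nonneg Eq1[OF n])
  also have "\<dots> = 2^n * (1 - 1/2^k)^m" by (simp add: card_cube)
  finally show ?thesis .
qed

lemma gq_sq: "gq x F * gq x F = gq x F" by (simp add: gq_def)

lemma EZ2:
  fixes m :: nat
  assumes n: "1 \<le> n" "k \<le> n"
  shows "measure_pmf.expectation (P_unif n k m) (\<lambda>V. (Zc n m V)^2)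
     \<le> 2^n * (1 - 1/2^k)^m + (2^n * (1 - 1/2^k)^m)^2"
proof -
  define \<mu> :: real where "\<mu> = 2^n * (1 - 1/2^k)^m"
  define q where "q = (1 - 1/(2::real)^k)"
  have q0: "q \<ge> 0" by (simp add: q_def)
  have sq: "(Zc n m V)^2 = (\<Sum>x\<in>cube n. \<Sum>y\<in>cube n. \<Prod>j<m. gq x (V j) * gq y (V j))" for V
    unfolding Zc_def power2_eq_square sum_product prod.distrib ..
  have "measure_pmf.expectation (P_unif n k m) (\<lambda>V. (Zc n m V)^2)
      = (\<Sum>x\<in>cube n. \<Sum>y\<in>cube n. measure_pmf.expectation (P_unif n k m) (\<lambda>V. \<Prod>j<m. gq x (V j) * gq y (V j)))"
    unfolding sq
    by (subst Bochner_Integration.integral_sum, rule integ_Omega[OF n(2)],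
        intro sum.cong refl Bochner_Integration.integral_sum integ_Omega[OF n(2)])
  also have "\<dots> = (\<Sum>x\<in>cube n. \<Sum>y\<in>cube n.
       (measure_pmf.expectation (pmf_of_set (kflats n k)) (\<lambda>F. gq x F * gq y F))^m)"
    by (intro sum.cong refl E_prod[OF n(2)]) (simp add: gq_nonneg)
  also have "\<dots> \<le> (\<Sum>x\<in>cube n. q^m + (\<Sum>y\<in>cube n - {x}. (q^2)^m))"
  proof (rule sum_mono)
    fix x assume x: "x \<in> cube n"
    have "(\<Sum>y\<in>cube n. (measure_pmf.expectation (pmf_of_set (kflats n k)) (\<lambda>F. gq x F * gq y F))^m)
       = (measure_pmf.expectation (pmf_of_set (kflats n k)) (\<lambda>F. gq x F * gq x F))^m +
         (\<Sum>y\<in>cube n - {x}. (measure_pmf.expectation (pmf_of_set (kflats n k)) (\<lambda>F. gq x F * gq y F))^m)"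
      using x finite_cube by (simp add: sum.remove)
    also have "\<dots> \<le> q^m + (\<Sum>y\<in>cube n - {x}. (q^2)^m)"
    proof (rule add_mono)
      show "(measure_pmf.expectation (pmf_of_set (kflats n k)) (\<lambda>F. gq x F * gq x F))^m \<le> q^m"
        by (simp add: gq_sq Eq1[OF n x] q_def)
      show "(\<Sum>y\<in>cube n - {x}. (measure_pmf.expectation (pmf_of_set (kflats n k)) (\<lambda>F. gq x F * gq y F))^m)
          \<le> (\<Sum>y\<in>cube n - {x}. (q^2)^m)"
      proof (rule sum_mono)
        fix y assume y: "y \<in> cube n - {x}"
        have "0 \<le> measure_pmf.expectation (pmf_of_set (kflats n k)) (\<lambda>F. gq x F * gq y F)"
          by (intro Bochner_Integration.integral_nonneg) (simp add: gq_nonneg)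
        then show "(measure_pmf.expectation (pmf_of_set (kflats n k)) (\<lambda>F. gq x F * gq y F))^m \<le> (q^2)^m"
          using Eq2[OF n x, of y] y by (intro power_mono) (auto simp: q_def)
      qed
    qed
    finally show "(\<Sum>y\<in>cube n. (measure_pmf.expectation (pmf_of_set (kflats n k)) (\<lambda>F. gq x F * gq y F))^m)
       \<le> q^m + (\<Sum>y\<in>cube n - {x}. (q^2)^m)" .
  qed
  also have "\<dots> = 2^n * (q^m + (2^n - 1) * (q^2)^m)"
    using finite_cube by (simp add: card_Diff_singleton card_cube of_nat_diff)
  also have "\<dots> \<le> 2^n * (q^m + 2^n * (q^2)^m)"
    using q0 by (intro mult_left_mono add_left_mono mult_right_mono) auto
  also have "\<dots> = 2^n * q^m + (2^n * q^m)^2"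
  proof -
    have "(q^2)^m = (q^m)^2" by (metis power_mult mult.commute)
    then show ?thesis by (simp add: power2_eq_square algebra_simps)
  qed
  also have "\<dots> = 2^n * (1 - 1/2^k)^m + (2^n * (1 - 1/2^k)^m)^2" by (simp add: q_def)
  finally show ?thesis .
qed



lemma prob_le:
  assumes n: "1 \<le> n" "k \<le> n"
  shows "measure_pmf.prob (P_unif n k m) {V. FLAT n m V} \<le> 2^n * (1 - 1/2^k)^m"
proof -
  have "measure_pmf.prob (P_unif n k m) {V. FLAT n m V}
      = measure_pmf.expectation (P_unif n k m) (indicator {V. FLAT n m V})"
    by simp
  also have "\<dots> \<le> measure_pmf.expectation (P_unif n k m) (Zc n m)"
    by (intro integral_mono integ_Omega[OF n(2)] FLAT_le)
  also have "\<dots> = 2^n * (1 - 1/2^k)^m" by (rule EZ[OF n])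
  finally show ?thesis .
qed

lemma prob_ge:
  assumes n: "1 \<le> n" "k \<le> n" and mu: "2^n * (1 - 1/2^k)^m > (0::real)"
  shows "measure_pmf.prob (P_unif n k m) {V. FLAT n m V} \<ge> 1 - 1 / (2^n * (1 - 1/2^k)^m)"
proof -
  define \<mu> :: real where "\<mu> = 2^n * (1 - 1/2^k)^m"
  define \<Omega> where "\<Omega> = P_unif n k m"
  define A where "A = {V. \<not> FLAT n m V}"
  have I: "integrable (measure_pmf \<Omega>) f" for f :: "_ \<Rightarrow> real"
    unfolding \<Omega>_def by (rule integ_Omega[OF n(2)])
  have pt: "indicator A V * \<mu>^2 \<le> (Zc n m V - \<mu>)^2" for V
  proof (cases "V \<in> A")
    case True
    then have "Zc n m V = 0" by (intro not_FLAT) (simp add: A_def)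
    then show ?thesis using True by simp
  next
    case False
    then show ?thesis by simp
  qed
  have "measure_pmf.prob \<Omega> A * \<mu>^2 = measure_pmf.expectation \<Omega> (\<lambda>V. indicator A V * \<mu>^2)"
    by simp
  also have "\<dots> \<le> measure_pmf.expectation \<Omega> (\<lambda>V. (Zc n m V - \<mu>)^2)"
    by (intro integral_mono I pt)
  also have "(\<lambda>V. (Zc n m V - \<mu>)^2) = (\<lambda>V. (Zc n m V)^2 - 2 * \<mu> * Zc n m V + \<mu>^2)"
    by (simp add: power2_eq_square algebra_simps)
  also have "measure_pmf.expectation \<Omega> \<dots>
      = measure_pmf.expectation \<Omega> (\<lambda>V. (Zc n m V)^2) - 2 * \<mu> * measure_pmf.expectation \<Omega> (Zc n m) + \<mu>^2"
    by (simp add: I)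
  also have "\<dots> \<le> (\<mu> + \<mu>^2) - 2 * \<mu> * \<mu> + \<mu>^2"
    using EZ2[OF n, of m] EZ[OF n, of m] unfolding \<Omega>_def \<mu>_def by simp
  also have "\<dots> = \<mu>" by (simp add: power2_eq_square)
  finally have pA: "measure_pmf.prob \<Omega> A * \<mu>^2 \<le> \<mu>" .
  have mpos: "\<mu> > 0" using mu by (simp add: \<mu>_def)
  have pA': "measure_pmf.prob \<Omega> A \<le> 1 / \<mu>"
  proof -
    have "measure_pmf.prob \<Omega> A * \<mu> * \<mu> \<le> 1 * \<mu>" using pA by (simp add: power2_eq_square mult.assoc)
    then have "measure_pmf.prob \<Omega> A * \<mu> \<le> 1" using mpos by (simp add: mult_le_cancel_right)
    then show ?thesis using mpos by (simp add: field_simps)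
  qed
  have "measure_pmf.prob \<Omega> {V. FLAT n m V} = 1 - measure_pmf.prob \<Omega> A"
  proof -
    have "{V. FLAT n m V} = space (measure_pmf \<Omega>) - A" by (auto simp: A_def)
    then show ?thesis using measure_pmf.prob_compl[of A \<Omega>] by simp
  qed
  then show ?thesis using pA' by (simp add: \<Omega>_def \<mu>_def)
qed



lemma mu_exp:
  fixes q :: real assumes "q > 0"
  shows "2^n * q^m = exp (real n * ln 2 + real m * ln q)"
  using assms by (simp add: exp_add exp_of_nat_mult)

lemma floor_bounds:
  fixes \<Delta> :: real assumes "\<Delta> > 0"
  shows "real (nat \<lfloor>\<Delta> * real n\<rfloor>) \<le> \<Delta> * real n"
    and "real (nat \<lfloor>\<Delta> * real n\<rfloor>) \<ge> \<Delta> * real n - 1"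
proof -
  have nn: "\<lfloor>\<Delta> * real n\<rfloor> \<ge> 0" using assms by simp
  then have e: "real (nat \<lfloor>\<Delta> * real n\<rfloor>) = real_of_int \<lfloor>\<Delta> * real n\<rfloor>" by simp
  show "real (nat \<lfloor>\<Delta> * real n\<rfloor>) \<le> \<Delta> * real n" unfolding e by simp
  show "real (nat \<lfloor>\<Delta> * real n\<rfloor>) \<ge> \<Delta> * real n - 1" unfolding e by linarith
qed

theorem mainTheorem3:
  fixes k :: nat and \<Delta> :: real
  assumes "k \<ge> 1" and "\<Delta> > 0"
  shows "(\<Delta> < Delta_k k \<longrightarrow>
           (\<lambda>n. measure_pmf.prob (P_unif n k (nat \<lfloor>\<Delta> * real n\<rfloor>))
                   {V. FLAT n (nat \<lfloor>\<Delta> * real n\<rfloor>) V}) \<longlonglongrightarrow> 1)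
       \<and> (\<Delta> > Delta_k k \<longrightarrow>
           (\<lambda>n. measure_pmf.prob (P_unif n k (nat \<lfloor>\<Delta> * real n\<rfloor>))
                   {V. FLAT n (nat \<lfloor>\<Delta> * real n\<rfloor>) V}) \<longlonglongrightarrow> 0)"
proof -
  define q :: real where "q = 1 - 1/2^k"
  define L where "L = ln q"
  define M where "M n = nat \<lfloor>\<Delta> * real n\<rfloor>" for n :: nat
  define P where "P n = measure_pmf.prob (P_unif n k (M n)) {V. FLAT n (M n) V}" for n
  have k2: "(2::real)^k \<ge> 2" using assms(1)
    by (metis power_one_right power_increasing one_le_numeral)
  have q0: "q > 0" and q1: "q < 1" using k2 by (auto simp: q_def field_simps)
  have L0: "L < 0" using q0 q1 by (simp add: L_def)
  have Dk: "Delta_k k = - ln 2 / L"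
  proof -
    have "2 powr (- real k) = 1 / 2^k" by (simp add: powr_minus powr_realpow divide_inverse)
    then show ?thesis by (simp add: Delta_k_def L_def q_def ln_div)
  qed
  have ev: "eventually (\<lambda>n. 1 \<le> n \<and> k \<le> n) sequentially"
    by (rule eventually_sequentiallyI[of "max 1 k"]) auto
  have mu: "2^n * q^(M n) = exp (real n * ln 2 + real (M n) * L)" for n
    using mu_exp[OF q0] by (simp add: L_def)
  have part1: "(\<lambda>n. P n) \<longlonglongrightarrow> 1" if less: "\<Delta> < Delta_k k"
  proof -
    define \<delta> where "\<delta> = ln 2 + \<Delta> * L"
    have "(- ln 2 / L) * L < \<Delta> * L"
      by (rule mult_strict_right_mono_neg) (use less L0 Dk in auto)
    then have dpos: "\<delta> > 0" using L0 by (simp add: \<delta>_def)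
    have low: "exp \<delta> ^ n \<le> 2^n * q^(M n)" for n
    proof -
      have "real (M n) * L \<ge> (\<Delta> * real n) * L"
        using floor_bounds(1)[OF assms(2), of n] L0 by (simp add: M_def mult_right_mono_neg)
      then have "exp (real n * \<delta>) \<le> exp (real n * ln 2 + real (M n) * L)"
        by (simp add: \<delta>_def algebra_simps)
      then show ?thesis by (simp add: mu exp_of_nat_mult)
    qed
    have lb: "eventually (\<lambda>n. 1 - exp (- \<delta>) ^ n \<le> P n) sequentially"
      using ev
    proof (rule eventually_mono)
      fix n assume n: "1 \<le> n \<and> k \<le> n"
      have epos: "exp \<delta> ^ n > 0" by simp
      then have mupos: "2^n * q^(M n) > 0" using low[of n] by linarith
      have "1 / (2^n * q^(M n)) \<le> 1 / exp \<delta> ^ n"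
        using low[of n] epos mupos by (intro divide_left_mono) (auto intro: mult_pos_pos)
      also have "\<dots> = exp (- \<delta>) ^ n" by (simp add: exp_minus power_inverse divide_inverse)
      finally have "1 - exp (- \<delta>) ^ n \<le> 1 - 1 / (2^n * q^(M n))" by simp
      also have "\<dots> \<le> P n" unfolding P_def q_def
        using prob_ge[of n k "M n"] n mupos by (simp add: q_def)
      finally show "1 - exp (- \<delta>) ^ n \<le> P n" .
    qed
    have ub: "eventually (\<lambda>n. P n \<le> 1) sequentially"
      by (simp add: P_def measure_pmf.prob_le_1)
    have "(\<lambda>n. 1 - exp (- \<delta>) ^ n) \<longlonglongrightarrow> 1 - 0"
      by (intro tendsto_diff tendsto_const LIMSEQ_realpow_zero) (use dpos in auto)
    then show ?thesis using tendsto_sandwich[OF lb ub] by simp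
  qed
  have part2: "(\<lambda>n. P n) \<longlonglongrightarrow> 0" if gr: "\<Delta> > Delta_k k"
  proof -
    define \<delta> where "\<delta> = - (ln 2 + \<Delta> * L)"
    have "\<Delta> * L < (- ln 2 / L) * L"
      by (rule mult_strict_right_mono_neg) (use gr L0 Dk in auto)
    then have dpos: "\<delta> > 0" using L0 by (simp add: \<delta>_def)
    have up: "2^n * q^(M n) \<le> exp (- L) * exp (- \<delta>) ^ n" for n
    proof -
      have "real (M n) * L \<le> (\<Delta> * real n - 1) * L"
        using floor_bounds(2)[OF assms(2), of n] L0 by (simp add: M_def mult_right_mono_neg)
      then have "exp (real n * ln 2 + real (M n) * L) \<le> exp (- L + real n * (- \<delta>))"
        by (simp add: \<delta>_def algebra_simps)
      moreover have e: "exp (- L + real n * (- \<delta>)) = exp (- L) * exp (- \<delta>) ^ n"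
        by (simp only: exp_add exp_of_nat_mult)
      ultimately show ?thesis unfolding mu by (rule ord_le_eq_trans)
    qed
    have ubd: "eventually (\<lambda>n. P n \<le> exp (- L) * exp (- \<delta>) ^ n) sequentially"
      using ev
    proof (rule eventually_mono)
      fix n assume n: "1 \<le> n \<and> k \<le> n"
      have "P n \<le> 2^n * q^(M n)" unfolding P_def q_def using prob_le[of n k "M n"] n by simp
      then show "P n \<le> exp (- L) * exp (- \<delta>) ^ n" using up[of n] by linarith
    qed
    have lbd: "eventually (\<lambda>n. 0 \<le> P n) sequentially" by (simp add: P_def)
    have "(\<lambda>n. exp (- L) * exp (- \<delta>) ^ n) \<longlonglongrightarrow> exp (- L) * 0"
      by (intro tendsto_mult tendsto_const LIMSEQ_realpow_zero) (use dpos in auto)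
    then show ?thesis using tendsto_sandwich[OF lbd ubd] by simp
  qed
  show ?thesis using part1 part2 unfolding P_def M_def by blast
qed


end
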